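(* Let $\ell\geq 1$ be an integer. For integers $0\leq k\leq s\leq \ell$ there are constants $\sigma_{\ell,s,k}$ (depending only on $\ell,s,k$) such that the following holds: for every $\xi\in\mathbb{R}$, $h\in\mathbb{R}\setminus\{0\}$ and $\mathbf{a}=(a_0,\ldots,a_\ell)\in\mathbb{R}^{\ell+1}$, if $q_{\mathbf{a}}$ denotes the unique polynomial of degree at most $\ell$ with $q_{\mathbf{a}}(\xi+ih)=a_i$ for $i=0,\ldots,\ell$, then \[ q_{\mathbf{a}}^{(\ell-s)}(\xi)=h^{s-\ell}\sum_{k=0}^{s}\sigma_{\ell,s,k}\Bigg(\sum_{j=0}^{\ell}(-1)^j\binom{\ell}{j}j^k a_j\Bigg), \] where $q_{\mathbf{a}}^{(\ell-s)}$ denotes the $(\ell-s)$-th derivative.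
   Context: The convention $0^0=1$ is used. *)

theory Defs
  imports Complex_Main "HOL-Computational_Algebra.Polynomial"
begin

end

theory Submission
  imports Defs
begin

lemma alt_shift:
  fixes f :: "nat \<Rightarrow> real"
  shows "(\<Sum>j\<le>Suc l. (-1)^j * real (Suc l choose j) * f j)
       = (\<Sum>j\<le>l. (-1)^j * real (l choose j) * (f j - f (Suc j)))"
proof -
  define g where "g j = (-1)^j * real (l choose j) * f j" for j
  have "(\<Sum>j\<le>Suc l. (-1)^j * real (Suc l choose j) * f j)
      = f 0 + (\<Sum>i\<le>l. (-1)^(Suc i) * real (Suc l choose Suc i) * f (Suc i))"
    by (subst sum.atMost_Suc_shift) simp
  also have "\<dots> = f 0 + (\<Sum>i\<le>l. - ((-1)^i * real (l choose i) * f (Suc i)) + g (Suc i))"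
    by (simp add: g_def algebra_simps)
  also have "\<dots> = f 0 - (\<Sum>i\<le>l. (-1)^i * real (l choose i) * f (Suc i))
       + (\<Sum>i\<le>l. g (Suc i))"
    by (simp add: sum.distrib sum_subtractf)
  also have "(\<Sum>i\<le>l. g (Suc i)) = (\<Sum>i\<le>Suc l. g i) - g 0"
    by (subst sum.atMost_Suc_shift) simp
  also have "(\<Sum>i\<le>Suc l. g i) = (\<Sum>i\<le>l. g i)"
    by (simp add: g_def)
  finally show ?thesis
    by (simp add: g_def algebra_simps sum_subtractf)
qed

lemma S_val:
  "n \<le> l \<Longrightarrow> (\<Sum>j\<le>l. (-1)^j * real (l choose j) * real j ^ n)
      = (if n = l then (-1)^l * fact l else 0)"
proof (induction l arbitrary: n)
  case 0
  then show ?case by simp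
next
  case (Suc l)
  have diff: "real j ^ n - real (Suc j) ^ n = - (\<Sum>i<n. real (n choose i) * real j ^ i)" for j
  proof -
    have "real (Suc j) ^ n = (real j + 1) ^ n" by (simp add: add.commute)
    also have "\<dots> = (\<Sum>i\<le>n. real (n choose i) * real j ^ i)"
      by (subst binomial_ring) simp
    also have "\<dots> = (\<Sum>i<n. real (n choose i) * real j ^ i) + real j ^ n"
      by (simp add: lessThan_Suc_atMost[symmetric])
    finally show ?thesis by simp
  qed
  have "(\<Sum>j\<le>Suc l. (-1)^j * real (Suc l choose j) * real j ^ n)
     = (\<Sum>j\<le>l. (-1)^j * real (l choose j) * (- (\<Sum>i<n. real (n choose i) * real j ^ i)))"
    by (subst alt_shift) (simp only: diff)
  also have "\<dots> = - (\<Sum>i<n. real (n choose i) * (\<Sum>j\<le>l. (-1)^j * real (l choose j) * real j ^ i))"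
    by (simp add: sum_distrib_left sum_negf sum.swap[of _ "{..l}"] algebra_simps)
  also have "\<dots> = - (\<Sum>i<n. if i = l then real (n choose i) * ((-1)^l * fact l) else 0)"
    using Suc by (intro arg_cong[where f=uminus] sum.cong) auto
  also have "\<dots> = (if n = Suc l then (-1)^(Suc l) * fact (Suc l) else 0)"
    using Suc.prems by (auto simp: sum.delta algebra_simps)
  finally show ?case .
qed

lemma sum_rev_atMost: "(\<Sum>t\<le>(l::nat). g t) = (\<Sum>r\<le>l. g (l - r))"
  by (rule sum.reindex_bij_witness[where i="\<lambda>t. l - t" and j="\<lambda>t. l - t"]) auto

lemma sum_atMost_split_last: "sum f {..(s::nat)} = sum f {..<s} + f s"
  by (simp add: lessThan_Suc_atMost[symmetric])

lemma tri:
  fixes S :: "nat \<Rightarrow> real" and l :: nat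
  assumes S0: "\<forall>n<l. S n = 0" and Sl: "S l \<noteq> 0"
  shows "s \<le> l \<Longrightarrow> \<exists>w. (\<forall>k>s. w k = 0) \<and>
           (\<forall>c. c (l-s) = (\<Sum>k\<le>l. w k * (\<Sum>t\<le>l. c t * S (k+t))))"
proof (induction s rule: less_induct)
  case (less s)
  have "\<forall>s'\<in>{..<s}. \<exists>w. (\<forall>k>s'. w k = 0) \<and>
           (\<forall>c. c (l-s') = (\<Sum>k\<le>l. w k * (\<Sum>t\<le>l. c t * S (k+t))))"
    using less by auto
  then obtain W where W0: "\<forall>s'\<in>{..<s}. (\<forall>k>s'. W s' k = 0) \<and>
           (\<forall>c. c (l-s') = (\<Sum>k\<le>l. W s' k * (\<Sum>t\<le>l. c t * S (k+t))))"
    by (erule bchoice[THEN exE])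
  have W: "\<And>s'. s' < s \<Longrightarrow> (\<forall>k>s'. W s' k = 0) \<and>
           (\<forall>c. c (l-s') = (\<Sum>k\<le>l. W s' k * (\<Sum>t\<le>l. c t * S (k+t))))"
    using W0 by blast
  define w where "w k = ((if k = s then 1 else 0) - (\<Sum>s'<s. S (s+(l-s')) * W s' k)) / S l" for k
  have wz: "\<forall>k>s. w k = 0"
    unfolding w_def using W by auto
  have "c (l-s) = (\<Sum>k\<le>l. w k * (\<Sum>t\<le>l. c t * S (k+t)))" for c
  proof -
    define D where "D k = (\<Sum>t\<le>l. c t * S (k+t))" for k
    have "D s = (\<Sum>r\<le>l. c (l-r) * S (s+(l-r)))"
      unfolding D_def by (rule sum_rev_atMost)
    also have "\<dots> = (\<Sum>r\<le>s. c (l-r) * S (s+(l-r)))"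
      using less.prems S0 by (intro sum.mono_neutral_right) auto
    also have "\<dots> = (\<Sum>r<s. c (l-r) * S (s+(l-r))) + c (l-s) * S l"
      using less.prems by (simp only: sum_atMost_split_last) simp
    finally have Ds: "D s = (\<Sum>r<s. S (s+(l-r)) * (\<Sum>k\<le>l. W r k * D k)) + c (l-s) * S l"
      using W unfolding D_def by (simp add: mult.commute)
    have "(\<Sum>k\<le>l. w k * D k)
        = ((\<Sum>k\<le>l. (if k = s then 1 else 0) * D k) - (\<Sum>k\<le>l. \<Sum>s'<s. S (s+(l-s')) * W s' k * D k)) / S l"
      unfolding w_def by (simp add: sum_divide_distrib[symmetric] sum_subtractf[symmetric] sum_distrib_right sum_distrib_left algebra_simps)
    also have "(\<Sum>k\<le>l. (if k = s then 1 else 0) * D k) = D s"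
      using less.prems by (subst sum.cong[OF refl, of _ _ "\<lambda>k. if k = s then D k else 0"]) auto
    also have "(\<Sum>k\<le>l. \<Sum>s'<s. S (s+(l-s')) * W s' k * D k) = (\<Sum>r<s. S (s+(l-r)) * (\<Sum>k\<le>l. W r k * D k))"
      by (subst sum.swap) (simp add: sum_distrib_left mult.assoc)
    finally have "(\<Sum>k\<le>l. w k * D k) = (D s - (\<Sum>r<s. S (s+(l-r)) * (\<Sum>k\<le>l. W r k * D k))) / S l" .
    then have "c (l-s) = (\<Sum>k\<le>l. w k * D k)" using Ds Sl by (simp add: field_simps)
    then show ?thesis unfolding D_def .
  qed
  then show ?case using wz by blast
qed


lemma deriv_comp:
  fixes q :: "real poly"
  shows "(pderiv^^m) (pcompose q [:\<xi>,h:]) = smult (h^m) (pcompose ((pderiv^^m) q) [:\<xi>,h:])"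
proof (induction m)
  case 0
  then show ?case by simp
next
  case (Suc m)
  show ?case
    by (simp add: Suc pderiv_smult pderiv_pcompose pderiv_pCons) (simp only: mult.commute)
qed

lemma poly_sum_le:
  fixes p :: "real poly"
  assumes "degree p \<le> l"
  shows "poly p x = (\<Sum>t\<le>l. coeff p t * x^t)"
  unfolding poly_altdef using assms
  by (intro sum.mono_neutral_left) (auto simp: coeff_eq_0)

lemma main_ls:
  assumes "s \<le> l"
  shows "\<exists>w. \<forall>(\<xi>::real) (h::real) (a::nat \<Rightarrow> real) (q::real poly).
       h \<noteq> 0 \<longrightarrow> degree q \<le> l \<longrightarrow>
       (\<forall>i \<le> l. poly q (\<xi> + real i * h) = a i) \<longrightarrow>
       poly ((pderiv ^^ (l - s)) q) \<xi> =
         h powi (int s - int l) *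
         (\<Sum>k = 0..s. w k *
            (\<Sum>j = 0..l. (-1) ^ j * real (l choose j) * real j ^ k * a j))"
proof -
  define S where "S n = (\<Sum>j\<le>l. (-1)^j * real (l choose j) * real j ^ n)" for n
  have S0: "\<forall>n<l. S n = 0" unfolding S_def using S_val by auto
  have Sl: "S l \<noteq> 0" unfolding S_def using S_val[of l l] by simp
  obtain w where wz: "\<forall>k>s. w k = 0"
    and wc: "\<forall>c. c (l-s) = (\<Sum>k\<le>l. w k * (\<Sum>t\<le>l. c t * S (k+t)))"
    using tri[OF S0 Sl assms] by blast
  define m where "m = l - s"
  show ?thesis
  proof (rule exI[of _ "\<lambda>k. fact m * w k"], intro allI impI)
    fix \<xi> h :: real and a :: "nat \<Rightarrow> real" and q :: "real poly"
    assume h: "h \<noteq> 0" and dq: "degree q \<le> l" and qa: "\<forall>i \<le> l. poly q (\<xi> + real i * h) = a i"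
    define p where "p = pcompose q [:\<xi>,h:]"
    have dp: "degree p \<le> l" unfolding p_def using dq h by (simp add: degree_pcompose)
    have pa: "a j = (\<Sum>t\<le>l. coeff p t * real j ^ t)" if "j \<le> l" for j
    proof -
      have "a j = poly p (real j)" using qa that unfolding p_def
        by (simp add: poly_pcompose algebra_simps)
      then show ?thesis using poly_sum_le[OF dp] by simp
    qed
    have inner: "(\<Sum>j = 0..l. (-1) ^ j * real (l choose j) * real j ^ k * a j)
        = (\<Sum>t\<le>l. coeff p t * S (k+t))" for k
    proof -
      have "(\<Sum>j = 0..l. (-1) ^ j * real (l choose j) * real j ^ k * a j)
          = (\<Sum>j\<le>l. (-1) ^ j * real (l choose j) * real j ^ k * (\<Sum>t\<le>l. coeff p t * real j ^ t))"
        using pa by (auto simp: atLeast0AtMost intro!: sum.cong)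
      also have "\<dots> = (\<Sum>t\<le>l. coeff p t * S (k+t))"
        unfolding S_def sum_distrib_left
      proof (subst sum.swap, intro sum.cong refl)
        fix t j
        show "(-1) ^ j * real (l choose j) * real j ^ k * (coeff p t * real j ^ t)
            = coeff p t * ((-1) ^ j * real (l choose j) * real j ^ (k + t))"
          by (simp add: power_add)
      qed
      finally show ?thesis .
    qed
    have rhs: "(\<Sum>k = 0..s. fact m * w k *
            (\<Sum>j = 0..l. (-1) ^ j * real (l choose j) * real j ^ k * a j)) = fact m * coeff p m"
    proof -
      have "(\<Sum>k = 0..s. fact m * w k *
            (\<Sum>j = 0..l. (-1) ^ j * real (l choose j) * real j ^ k * a j))
          = fact m * (\<Sum>k\<le>s. w k * (\<Sum>t\<le>l. coeff p t * S (k+t)))"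
        unfolding inner by (simp only: atLeast0AtMost sum_distrib_left mult.assoc)
      also have "(\<Sum>k\<le>s. w k * (\<Sum>t\<le>l. coeff p t * S (k+t)))
           = (\<Sum>k\<le>l. w k * (\<Sum>t\<le>l. coeff p t * S (k+t)))"
        using wz assms by (intro sum.mono_neutral_left) auto
      also have "\<dots> = coeff p m" using wc m_def by metis
      finally show ?thesis .
    qed
    have E1: "poly ((pderiv^^m) p) 0 = h^m * poly ((pderiv ^^ m) q) \<xi>"
      unfolding p_def deriv_comp by (simp add: poly_pcompose)
    have E2: "poly ((pderiv^^m) p) 0 = fact m * coeff p m"
      by (simp add: poly_0_coeff_0 coeff_higher_pderiv pochhammer_fact)
    have E3: "h powi (int s - int l) = inverse (h ^ m)"
    proof -
      have "int s - int l = - int m" using assms m_def by simp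
      then show ?thesis by (simp add: power_int_minus)
    qed
    from E1 E2 have "h^m * poly ((pderiv^^m) q) \<xi> = fact m * coeff p m" by simp
    then have X: "poly ((pderiv^^m) q) \<xi> = inverse (h^m) * (fact m * coeff p m)"
      using h by (simp add: field_simps)
    show "poly ((pderiv ^^ (l - s)) q) \<xi> =
         h powi (int s - int l) *
         (\<Sum>k = 0..s. fact m * w k *
            (\<Sum>j = 0..l. (-1) ^ j * real (l choose j) * real j ^ k * a j))"
      unfolding E3 rhs m_def[symmetric] by (rule X)
  qed
qed

theorem proposition2:
  shows "\<exists>\<sigma> :: nat \<Rightarrow> nat \<Rightarrow> nat \<Rightarrow> real.
    \<forall>l::nat. l \<ge> 1 \<longrightarrow>
    (\<forall>s \<le> l. \<forall>(\<xi>::real) (h::real) (a::nat \<Rightarrow> real) (q::real poly).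
       h \<noteq> 0 \<longrightarrow> degree q \<le> l \<longrightarrow>
       (\<forall>i \<le> l. poly q (\<xi> + real i * h) = a i) \<longrightarrow>
       poly ((pderiv ^^ (l - s)) q) \<xi> =
         h powi (int s - int l) *
         (\<Sum>k = 0..s. \<sigma> l s k *
            (\<Sum>j = 0..l. (-1) ^ j * real (l choose j) * real j ^ k * a j)))"
proof -
  have "\<forall>l. \<forall>s. \<exists>w. s \<le> l \<longrightarrow> (\<forall>(\<xi>::real) (h::real) (a::nat \<Rightarrow> real) (q::real poly).
       h \<noteq> 0 \<longrightarrow> degree q \<le> l \<longrightarrow>
       (\<forall>i \<le> l. poly q (\<xi> + real i * h) = a i) \<longrightarrow>
       poly ((pderiv ^^ (l - s)) q) \<xi> =
         h powi (int s - int l) *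
         (\<Sum>k = 0..s. w k *
            (\<Sum>j = 0..l. (-1) ^ j * real (l choose j) * real j ^ k * a j)))"
    using main_ls by blast
  then have "\<forall>l. \<exists>g. \<forall>s. s \<le> l \<longrightarrow> (\<forall>(\<xi>::real) (h::real) (a::nat \<Rightarrow> real) (q::real poly).
       h \<noteq> 0 \<longrightarrow> degree q \<le> l \<longrightarrow>
       (\<forall>i \<le> l. poly q (\<xi> + real i * h) = a i) \<longrightarrow>
       poly ((pderiv ^^ (l - s)) q) \<xi> =
         h powi (int s - int l) *
         (\<Sum>k = 0..s. g s k *
            (\<Sum>j = 0..l. (-1) ^ j * real (l choose j) * real j ^ k * a j)))"
    by (intro allI choice) blast
  then obtain \<sigma> where "\<forall>l. \<forall>s. s \<le> l \<longrightarrow> (\<forall>(\<xi>::real) (h::real) (a::nat \<Rightarrow> real) (q::real poly).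
       h \<noteq> 0 \<longrightarrow> degree q \<le> l \<longrightarrow>
       (\<forall>i \<le> l. poly q (\<xi> + real i * h) = a i) \<longrightarrow>
       poly ((pderiv ^^ (l - s)) q) \<xi> =
         h powi (int s - int l) *
         (\<Sum>k = 0..s. \<sigma> l s k *
            (\<Sum>j = 0..l. (-1) ^ j * real (l choose j) * real j ^ k * a j)))"
    by (erule choice[THEN exE])
  then show ?thesis by blast
qed

end
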